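(* Assume that for every $k\ge1$ the function $\hat{\mathcal L}(\cdot,y_k)$ is convex, that $\tau_1\tau_2\|K\|^2\le1/4$ and $\tau_1\le1/(4L)$, and let $(x_*,y_* )$ be a saddle point of $\Phi$. Set \[\Delta_0:=\frac{\|x_*-x_0\|^2}{2\tau_1}+\frac{\|y_*-y_0\|^2}{2\tau_2}.\] Then for every $N\ge1$ there exists $k_0\le N$ such that \[r^y_{k_0}\in\partial\big[-\hat{\mathcal L}(x_{k_0},\cdot)+h_2\big](y_{k_0}),\qquad r^x_{k_0}\in\partial_{\varepsilon_{k_0}}\big[\hat{\mathcal L}(\cdot,y_{k_0})+h_1\big](x_{k_0}),\] and \[\|r^y_{k_0}\|\le\frac{\sqrt{3\Delta_0}}{\sqrt{\tau_2N}},\qquad\|r^x_{k_0}\|\le\frac{2\sqrt{\Delta_0}}{\sqrt{\tau_1N}},\qquad\varepsilon_{k_0}\le\frac{\Delta_0}{2N},\] where $r^y_k:=(y^{k-1}-y^k)/\tau_2$, $r^x_k:=(x_{k-1}-x_k)/\tau_1$ and $\varepsilon_k:=\hat{\mathcal L}(x_k,y_k)-\ell_{\hat{\mathcal L}(\cdot,y_k)}(x_k;x_{k-1})$.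
   Context: Let $n,m_1,m_2$ be positive integers, $Q\in\mathbb R^{n\times n}$ symmetric, $c\in\mathbb R^n$, $A\in\mathbb R^{m_1\times n}$, $b\in\mathbb R^{m_1}$, $B\in\mathbb R^{m_2\times n}$, $d\in\mathbb R^{m_2}$. Let $K:=-\begin{pmatrix}A\\ B\end{pmatrix}$ and $r:=(b;d)$. Fix $\rho\ge0$ and let $\mathbf 1$ be the all-ones vector. Define $\hat{\mathcal L}(x,y):=\langle x,Qx\rangle+\langle c,x\rangle+\langle y,Kx+r\rangle+\rho\langle x,\mathbf 1-x\rangle$, with $\nabla_x\hat{\mathcal L}(x,y)=c+\rho\mathbf 1+K^\top y+2Qx-2\rho x$, $\nabla_y\hat{\mathcal L}(x,y)=Kx+r$. Let $Y:=\mathbb R_+^{m_1}\times\mathbb R^{m_2}$, $h_1$ the indicator of $[0,1]^n$, $h_2$ the indicator of $Y$ ($0$ on the set, $+\infty$ outside), $\Phi(x,y):=\hat{\mathcal L}(x,y)+h_1(x)-h_2(y)$. A saddle point $(x_*,y_* )$ satisfies $\Phi(x_*,y)\le\Phi(x_*,y_* )\le\Phi(x,y_* )$ for all $x,y$. $L:=2(\|Q\|+\rho)$ with spectral norm. For differentiable $f$, $\ell_f(x;x'):=f(x')+\langle\nabla f(x'),x-x'\rangle$. For convex $g$, $\partial g$ is the subdifferential and $\partial_\varepsilon g(x):=\{v:g(z)\ge g(x)+\langle v,z-x\rangle-\varepsilon\ \forall z\}$. PDHG iterates with $\tau_1,\tau_2>0$: $x_0\in[0,1]^n$, $y_0\in\mathbb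 R^{m_1+m_2}$, $x_{-1}:=x_0$, $\bar x_0:=x_0$, and for $k\ge1$: $y_k=\Pi_Y(y_{k-1}+\tau_2(K\bar x_{k-1}+r))$, $x_k=\Pi_{[0,1]^n}(x_{k-1}-\tau_1\nabla_x\hat{\mathcal L}(x_{k-1},y_k))$, $\bar x_k=2x_k-x_{k-1}$ ($\Pi$ = Euclidean projection). Also $y^0:=y_0$ and $y^k:=y_k+\tau_2K(\bar x_k-x_k)$ for $k\ge1$. *)

theory Defs
  imports "HOL-Analysis.Analysis"
begin

definition Kop :: "real^'n^'m1 \<Rightarrow> real^'n^'m2 \<Rightarrow> real^'n \<Rightarrow> ((real^'m1) \<times> (real^'m2))" where
  "Kop A B x = (- (A *v x), - (B *v x))"

definition KT :: "real^'n^'m1 \<Rightarrow> real^'n^'m2 \<Rightarrow> ((real^'m1) \<times> (real^'m2)) \<Rightarrow> real^'n" where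
  "KT A B y = - (transpose A *v fst y + transpose B *v snd y)"

definition Lhat :: "real^'n^'n \<Rightarrow> real^'n \<Rightarrow> real^'n^'m1 \<Rightarrow> real^'n^'m2 \<Rightarrow> real^'m1 \<Rightarrow> real^'m2
    \<Rightarrow> real \<Rightarrow> real^'n \<Rightarrow> ((real^'m1) \<times> (real^'m2)) \<Rightarrow> real" where
  "Lhat Q c A B b d \<rho> x y =
     x \<bullet> (Q *v x) + c \<bullet> x + y \<bullet> (Kop A B x + (b, d)) + \<rho> * (x \<bullet> (vec 1 - x))"

definition gradx :: "real^'n^'n \<Rightarrow> real^'n \<Rightarrow> real^'n^'m1 \<Rightarrow> real^'n^'m2
    \<Rightarrow> real \<Rightarrow> real^'n \<Rightarrow> ((real^'m1) \<times> (real^'m2)) \<Rightarrow> real^'n" where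
  "gradx Q c A B \<rho> x y = c + \<rho> *\<^sub>R vec 1 + KT A B y + 2 *\<^sub>R (Q *v x) - (2 * \<rho>) *\<^sub>R x"

definition unitbox :: "(real^'n) set" where
  "unitbox = {x. \<forall>i. 0 \<le> x $ i \<and> x $ i \<le> 1}"

definition Yset :: "((real^'m1) \<times> (real^'m2)) set" where
  "Yset = {y. \<forall>i. 0 \<le> fst y $ i}"

definition ind :: "'a set \<Rightarrow> 'a \<Rightarrow> ereal" where
  "ind S x = (if x \<in> S then 0 else \<infinity>)"

definition eps_subdiff :: "('a::real_inner \<Rightarrow> ereal) \<Rightarrow> real \<Rightarrow> 'a \<Rightarrow> 'a set" where
  "eps_subdiff f \<epsilon> x = {v. \<forall>z. f z \<ge> f x + ereal (inner v (z - x) - \<epsilon>)}"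

definition subdiff :: "('a::real_inner \<Rightarrow> ereal) \<Rightarrow> 'a \<Rightarrow> 'a set" where
  "subdiff f x = {v. \<forall>z. f z \<ge> f x + ereal (inner v (z - x))}"

text \<open>PDHG state after k steps: (x_{k-1}, x_k, y_k), with x_{-1} = x_0.
  Note xbar_k = 2 x_k - x_{k-1}.\<close>
primrec pdhg :: "real^'n^'n \<Rightarrow> real^'n \<Rightarrow> real^'n^'m1 \<Rightarrow> real^'n^'m2 \<Rightarrow> real^'m1 \<Rightarrow> real^'m2
    \<Rightarrow> real \<Rightarrow> real \<Rightarrow> real \<Rightarrow> real^'n \<Rightarrow> ((real^'m1) \<times> (real^'m2)) \<Rightarrow> nat
    \<Rightarrow> (real^'n) \<times> (real^'n) \<times> ((real^'m1) \<times> (real^'m2))" where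
  "pdhg Q c A B b d \<rho> \<tau>1 \<tau>2 x0 y0 0 = (x0, x0, y0)"
| "pdhg Q c A B b d \<rho> \<tau>1 \<tau>2 x0 y0 (Suc k) =
     (case pdhg Q c A B b d \<rho> \<tau>1 \<tau>2 x0 y0 k of (xp, x, y) \<Rightarrow>
       (let xb = 2 *\<^sub>R x - xp;
            y' = closest_point Yset (y + \<tau>2 *\<^sub>R (Kop A B xb + (b, d)));
            x' = closest_point unitbox (x - \<tau>1 *\<^sub>R gradx Q c A B \<rho> x y')
        in (x, x', y')))"

end

theory Submission imports Defs begin

lemma Q_bl: "bounded_linear (\<lambda>x. (Q::real^'n^'m) *v x)"
  using matrix_vector_mul_linear linear_conv_bounded_linear by blast

lemma Kop_bl: "bounded_linear (Kop A B)"
  unfolding Kop_def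
  by (intro bounded_linear_Pair bounded_linear_minus Q_bl)

lemma Kop_linear: "linear (Kop A B)"
  using Kop_bl bounded_linear.linear by blast

lemma inner_Kop: "y \<bullet> Kop A B x = KT A B y \<bullet> x"
  by (cases y) (simp add: Kop_def KT_def inner_add_left inner_diff_left dot_lmul_matrix)

lemma inner_symQ:
  fixes Q :: "real^'n^'n"
  assumes "transpose Q = Q"
  shows "x \<bullet> (Q *v h) = (Q *v x) \<bullet> h"
proof -
  have "Q *v x = x v* Q" by (metis assms transpose_matrix_vector)
  then show ?thesis by (simp add: dot_lmul_matrix)
qed

lemma Kop_add: "Kop A B (x + y) = Kop A B x + Kop A B y"
  using Kop_linear linear_add by blast
lemma Kop_diff: "Kop A B (x - y) = Kop A B x - Kop A B y"
  using Kop_linear linear_diff by blast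
lemma Kop_scale: "Kop A B (c *\<^sub>R x) = c *\<^sub>R Kop A B x"
  using Kop_linear linear_scale by blast

lemma Lhat_expand:
  assumes "transpose Q = Q"
  shows "Lhat Q c A B b d \<rho> (x + h) y = Lhat Q c A B b d \<rho> x y + gradx Q c A B \<rho> x y \<bullet> h
     + (h \<bullet> (Q *v h) - \<rho> * (h \<bullet> h))"
proof -
  have s: "x \<bullet> (Q *v h) = (Q *v x) \<bullet> h" by (rule inner_symQ[OF assms])
  show ?thesis
    unfolding Lhat_def gradx_def
    by (simp add: Kop_add inner_Kop matrix_vector_right_distrib inner_add_left inner_add_right
        inner_diff_left inner_diff_right s inner_commute algebra_simps)
qed

lemma Lhat_ydiff:
  "Lhat Q c A B b d \<rho> x y1 - Lhat Q c A B b d \<rho> x y2 = (y1 - y2) \<bullet> (Kop A B x + (b, d))"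
  unfolding Lhat_def by (simp add: inner_diff_left)

lemma grad_ineq:
  assumes symQ: "transpose Q = Q"
    and cv: "convex_on UNIV (\<lambda>x. Lhat Q c A B b d \<rho> x y)"
  shows "Lhat Q c A B b d \<rho> z y \<ge> Lhat Q c A B b d \<rho> x y + gradx Q c A B \<rho> x y \<bullet> (z - x)"
proof -
  define h where "h = z - x"
  define q where "q = h \<bullet> (Q *v h) - \<rho> * (h \<bullet> h)"
  have e1: "Lhat Q c A B b d \<rho> z y = Lhat Q c A B b d \<rho> x y + gradx Q c A B \<rho> x y \<bullet> h + q"
    using Lhat_expand[OF symQ, of c A B b d \<rho> x h y] unfolding q_def h_def by simp
  have e2: "Lhat Q c A B b d \<rho> (x + (1/2) *\<^sub>R h) y = Lhat Q c A B b d \<rho> x y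
      + (1/2) * (gradx Q c A B \<rho> x y \<bullet> h) + q / 4"
    using Lhat_expand[OF symQ, of c A B b d \<rho> x "(1/2) *\<^sub>R h" y] unfolding q_def
    apply (simp add: matrix_vector_mult_scaleR algebra_simps) by (simp add: diff_divide_distrib)
  have pt: "(1 - 1/2) *\<^sub>R x + (1/2) *\<^sub>R z = x + (1/2) *\<^sub>R h"
  proof -
    have "x = (1/2) *\<^sub>R x + (1/2) *\<^sub>R x" by (metis scaleR_add_left scaleR_one field_sum_of_halves)
    then show ?thesis unfolding h_def by (simp add: scaleR_diff_right)
  qed
  have "Lhat Q c A B b d \<rho> ((1 - 1/2) *\<^sub>R x + (1/2) *\<^sub>R z) y
     \<le> (1 - 1/2) * Lhat Q c A B b d \<rho> x y + (1/2) * Lhat Q c A B b d \<rho> z y"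
    using convex_onD[OF cv, of "1/2" x z] by simp
  then have "q \<ge> 0" using e1 e2 pt by (simp add: field_simps)
  then show ?thesis using e1 h_def by simp
qed

lemma two_inner_id:
  fixes u v w :: "'a::real_inner"
  shows "2 * ((u - v) \<bullet> (v - w)) = (norm (u - w))\<^sup>2 - (norm (v - w))\<^sup>2 - (norm (u - v))\<^sup>2"
proof -
  have "u - w = (u - v) + (v - w)" by simp
  then have "(norm (u - w))\<^sup>2 = (norm (u - v))\<^sup>2 + 2 * ((u - v) \<bullet> (v - w)) + (norm (v - w))\<^sup>2"
    by (metis power2_norm_eq_inner inner_add_left inner_add_right inner_commute mult_2 add.assoc add.commute)
  then show ?thesis by simp
qed

lemma closed_unitbox: "closed (unitbox :: (real^'n) set)"
  unfolding unitbox_def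
  by (intro closed_Collect_all closed_Collect_conj closed_Collect_le) (auto intro!: continuous_intros)

lemma convex_unitbox: "convex (unitbox :: (real^'n) set)"
  unfolding unitbox_def convex_def
proof (clarify, intro conjI)
  fix x y :: "real^'n" and u v :: real and i
  assume hx: "\<forall>i. 0 \<le> x $ i \<and> x $ i \<le> 1" and hy: "\<forall>i. 0 \<le> y $ i \<and> y $ i \<le> 1"
    and u: "0 \<le> u" and v: "0 \<le> v" and uv: "u + v = 1"
  have a: "0 \<le> u * x $ i" "u * x $ i \<le> u" using hx u by (auto simp: mult_left_le)
  have b: "0 \<le> v * y $ i" "v * y $ i \<le> v" using hy v by (auto simp: mult_left_le)
  show "0 \<le> (u *\<^sub>R x + v *\<^sub>R y) $ i" using a b by simp
  show "(u *\<^sub>R x + v *\<^sub>R y) $ i \<le> 1" using a b uv by simp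
qed

lemma closed_Yset: "closed (Yset :: ((real^'m1) \<times> (real^'m2)) set)"
  unfolding Yset_def
  by (intro closed_Collect_all closed_Collect_le) (auto intro!: continuous_intros)

lemma convex_Yset: "convex (Yset :: ((real^'m1) \<times> (real^'m2)) set)"
  unfolding Yset_def convex_def
  by (auto intro!: add_nonneg_nonneg mult_nonneg_nonneg)

lemma unitbox_ne: "(unitbox :: (real^'n) set) \<noteq> {}"
proof -
  have "0 \<in> (unitbox :: (real^'n) set)" unfolding unitbox_def by simp
  then show ?thesis by blast
qed

lemma Yset_ne: "(Yset :: ((real^'m1) \<times> (real^'m2)) set) \<noteq> {}"
proof -
  have "0 \<in> (Yset :: ((real^'m1) \<times> (real^'m2)) set)" unfolding Yset_def by simp
  then show ?thesis by blast
qed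

theorem mainTheorem2:
  fixes Q :: "real^'n^'n" and c :: "real^'n"
    and A :: "real^'n^'m1" and b :: "real^'m1"
    and B :: "real^'n^'m2" and d :: "real^'m2"
    and \<rho> \<tau>1 \<tau>2 :: real
    and x0 xs :: "real^'n" and y0 ys :: "(real^'m1) \<times> (real^'m2)"
    and xk :: "nat \<Rightarrow> real^'n" and yk :: "nat \<Rightarrow> (real^'m1) \<times> (real^'m2)"
    and yup :: "nat \<Rightarrow> (real^'m1) \<times> (real^'m2)"
  defines "xk \<equiv> (\<lambda>k. fst (snd (pdhg Q c A B b d \<rho> \<tau>1 \<tau>2 x0 y0 k)))"
    and "yk \<equiv> (\<lambda>k. snd (snd (pdhg Q c A B b d \<rho> \<tau>1 \<tau>2 x0 y0 k)))"
    and "yup \<equiv> (\<lambda>k. if k = 0 then y0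
                     else yk k + \<tau>2 *\<^sub>R Kop A B ((2 *\<^sub>R xk k - xk (k - 1)) - xk k))"
  assumes symQ: "transpose Q = Q"
    and rho: "\<rho> \<ge> 0"
    and tau1: "\<tau>1 > 0" and tau2: "\<tau>2 > 0"
    and x0: "x0 \<in> unitbox"
    and conv: "\<And>k. k \<ge> 1 \<Longrightarrow> convex_on UNIV (\<lambda>x. Lhat Q c A B b d \<rho> x (yk k))"
    and step1: "\<tau>1 * \<tau>2 * (onorm (Kop A B))\<^sup>2 \<le> 1 / 4"
    and step2: "\<tau>1 \<le> 1 / (4 * (2 * (onorm (\<lambda>x. Q *v x) + \<rho>)))"
    and saddle: "xs \<in> unitbox" "ys \<in> Yset"
      "\<And>x y. x \<in> unitbox \<Longrightarrow> y \<in> Yset \<Longrightarrow>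
         Lhat Q c A B b d \<rho> xs y \<le> Lhat Q c A B b d \<rho> xs ys
         \<and> Lhat Q c A B b d \<rho> xs ys \<le> Lhat Q c A B b d \<rho> x ys"
  shows "\<forall>N::nat. N \<ge> 1 \<longrightarrow>
    (let \<Delta>0 = (norm (xs - x0))\<^sup>2 / (2 * \<tau>1) + (norm (ys - y0))\<^sup>2 / (2 * \<tau>2) in
     \<exists>k0. 1 \<le> k0 \<and> k0 \<le> N \<and>
       (let ry = (1 / \<tau>2) *\<^sub>R (yup (k0 - 1) - yup k0);
            rx = (1 / \<tau>1) *\<^sub>R (xk (k0 - 1) - xk k0);
            \<epsilon> = Lhat Q c A B b d \<rho> (xk k0) (yk k0)
                - (Lhat Q c A B b d \<rho> (xk (k0 - 1)) (yk k0)
                   + gradx Q c A B \<rho> (xk (k0 - 1)) (yk k0) \<bullet> (xk k0 - xk (k0 - 1)))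
        in ry \<in> subdiff (\<lambda>y. ereal (- Lhat Q c A B b d \<rho> (xk k0) y) + ind Yset y) (yk k0)
         \<and> rx \<in> eps_subdiff (\<lambda>x. ereal (Lhat Q c A B b d \<rho> x (yk k0)) + ind unitbox x) \<epsilon> (xk k0)
         \<and> norm ry \<le> sqrt (3 * \<Delta>0) / sqrt (\<tau>2 * real N)
         \<and> norm rx \<le> 2 * sqrt \<Delta>0 / sqrt (\<tau>1 * real N)
         \<and> \<epsilon> \<le> \<Delta>0 / (2 * real N)))"
proof -
  define xp where "xp = (\<lambda>k. fst (pdhg Q c A B b d \<rho> \<tau>1 \<tau>2 x0 y0 k))"
  define \<kappa> where "\<kappa> = onorm (Kop A B)"
  define \<mu> where "\<mu> = onorm (\<lambda>x. Q *v x)"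
  have rec0: "xp 0 = x0" "xk 0 = x0" "yk 0 = y0" by (simp_all add: xp_def xk_def yk_def)
  have recS: "xp (Suc k) = xk k \<and> yk (Suc k) = closest_point Yset (yk k + \<tau>2 *\<^sub>R (Kop A B (2 *\<^sub>R xk k - xp k) + (b, d)))
       \<and> xk (Suc k) = closest_point unitbox (xk k - \<tau>1 *\<^sub>R gradx Q c A B \<rho> (xk k) (yk (Suc k)))" for k
  proof -
    obtain p1 p2 p3 where e: "pdhg Q c A B b d \<rho> \<tau>1 \<tau>2 x0 y0 k = (p1, p2, p3)" by (metis prod_cases3)
    show ?thesis by (simp add: xp_def xk_def yk_def e Let_def)
  qed
  have yupE: "yup k = yk k + \<tau>2 *\<^sub>R Kop A B (xk k - xp k)" for k
  proof (cases k)
    case 0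
    then show ?thesis using rec0 by (simp add: yup_def Kop_def zero_prod_def)
  next
    case (Suc j)
    have "(2 *\<^sub>R xk k - xk j) - xk k = xk k - xk j" by (simp add: scaleR_2)
    then show ?thesis using Suc recS[of j] by (simp add: yup_def)
  qed
  have xin: "xk k \<in> unitbox" for k
    by (cases k) (use rec0 x0 recS closest_point_in_set[OF closed_unitbox unitbox_ne] in auto)
  have yin: "yk (Suc k) \<in> Yset" for k
    using recS closest_point_in_set[OF closed_Yset Yset_ne] by metis
  define rx where "rx = (\<lambda>j. (1 / \<tau>1) *\<^sub>R (xk j - xk (Suc j)))"
  define ry where "ry = (\<lambda>j. (1 / \<tau>2) *\<^sub>R (yup j - yup (Suc j)))"
  define eps where "eps = (\<lambda>j. Lhat Q c A B b d \<rho> (xk (Suc j)) (yk (Suc j))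
                - (Lhat Q c A B b d \<rho> (xk j) (yk (Suc j))
                   + gradx Q c A B \<rho> (xk j) (yk (Suc j)) \<bullet> (xk (Suc j) - xk j)))"
  have hx_eq: "xk j - xk (Suc j) = \<tau>1 *\<^sub>R rx j" for j
    using tau1 by (simp add: rx_def)
  have hy_eq: "yup j - yup (Suc j) = \<tau>2 *\<^sub>R ry j" for j
    using tau2 by (simp add: ry_def)
  have P1: "(ry j + Kop A B (xk (Suc j)) + (b, d)) \<bullet> (z - yk (Suc j)) \<le> 0" if z: "z \<in> Yset" for j z
  proof -
    define a where "a = yk j + \<tau>2 *\<^sub>R (Kop A B (2 *\<^sub>R xk j - xp j) + (b, d))"
    have ya: "yk (Suc j) = closest_point Yset a" using recS[of j] a_def by simp
    have d1: "(a - yk (Suc j)) \<bullet> (z - yk (Suc j)) \<le> 0"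
      unfolding ya by (rule closest_point_dot[OF convex_Yset closed_Yset z])
    have "\<tau>2 *\<^sub>R ry j = yup j - yup (Suc j)" using hy_eq by simp
    also have "\<dots> = yk j + \<tau>2 *\<^sub>R Kop A B (xk j - xp j) - (yk (Suc j) + \<tau>2 *\<^sub>R Kop A B (xk (Suc j) - xk j))"
      using yupE[of j] yupE[of "Suc j"] recS[of j] by simp
    finally have e1: "\<tau>2 *\<^sub>R ry j = yk j + \<tau>2 *\<^sub>R Kop A B (xk j - xp j) - (yk (Suc j) + \<tau>2 *\<^sub>R Kop A B (xk (Suc j) - xk j))" .
    have "a - yk (Suc j) = \<tau>2 *\<^sub>R (ry j + Kop A B (xk (Suc j)) + (b, d))"
      unfolding a_def scaleR_add_right e1
      apply (simp add: Kop_diff Kop_add Kop_scale algebra_simps)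
      by (metis mult_2_right scaleR_add_left)
    then have "\<tau>2 * ((ry j + Kop A B (xk (Suc j)) + (b, d)) \<bullet> (z - yk (Suc j))) \<le> 0"
      using d1 by simp
    then show ?thesis using tau2 by (simp add: mult_le_0_iff)
  qed
  have P2: "(rx j - gradx Q c A B \<rho> (xk j) (yk (Suc j))) \<bullet> (z - xk (Suc j)) \<le> 0" if z: "z \<in> unitbox" for j z
  proof -
    define a where "a = xk j - \<tau>1 *\<^sub>R gradx Q c A B \<rho> (xk j) (yk (Suc j))"
    have xa: "xk (Suc j) = closest_point unitbox a" using recS[of j] a_def by simp
    have d1: "(a - xk (Suc j)) \<bullet> (z - xk (Suc j)) \<le> 0"
      unfolding xa by (rule closest_point_dot[OF convex_unitbox closed_unitbox z])
    have "a - xk (Suc j) = \<tau>1 *\<^sub>R (rx j - gradx Q c A B \<rho> (xk j) (yk (Suc j)))"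
      unfolding a_def scaleR_diff_right hx_eq[symmetric] by (simp add: algebra_simps)
    then have "\<tau>1 * ((rx j - gradx Q c A B \<rho> (xk j) (yk (Suc j))) \<bullet> (z - xk (Suc j))) \<le> 0"
      using d1 by simp
    then show ?thesis using tau1 by (simp add: mult_le_0_iff)
  qed
  have P3: "Lhat Q c A B b d \<rho> z (yk (Suc j)) \<ge> Lhat Q c A B b d \<rho> (xk j) (yk (Suc j))
      + gradx Q c A B \<rho> (xk j) (yk (Suc j)) \<bullet> (z - xk j)" for j z
    using grad_ineq[OF symQ conv[of "Suc j"]] by simp
  have PX: "Lhat Q c A B b d \<rho> z (yk (Suc j)) \<ge> Lhat Q c A B b d \<rho> (xk (Suc j)) (yk (Suc j))
       + rx j \<bullet> (z - xk (Suc j)) - eps j" if z: "z \<in> unitbox" for j z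
  proof -
    have "(rx j - gradx Q c A B \<rho> (xk j) (yk (Suc j))) \<bullet> (z - xk (Suc j)) \<le> 0" using P2[OF z] .
    moreover have "gradx Q c A B \<rho> (xk j) (yk (Suc j)) \<bullet> (z - xk j)
        = gradx Q c A B \<rho> (xk j) (yk (Suc j)) \<bullet> (z - xk (Suc j)) + gradx Q c A B \<rho> (xk j) (yk (Suc j)) \<bullet> (xk (Suc j) - xk j)"
      by (simp add: inner_diff_right)
    ultimately show ?thesis using P3[of j z] unfolding eps_def by (simp add: inner_diff_left)
  qed
  have PY: "- Lhat Q c A B b d \<rho> (xk (Suc j)) z \<ge> - Lhat Q c A B b d \<rho> (xk (Suc j)) (yk (Suc j))
       + ry j \<bullet> (z - yk (Suc j))" if z: "z \<in> Yset" for j z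
  proof -
    have "Lhat Q c A B b d \<rho> (xk (Suc j)) z - Lhat Q c A B b d \<rho> (xk (Suc j)) (yk (Suc j))
        = (z - yk (Suc j)) \<bullet> (Kop A B (xk (Suc j)) + (b, d))" by (rule Lhat_ydiff)
    moreover have "(ry j + Kop A B (xk (Suc j)) + (b, d)) \<bullet> (z - yk (Suc j))
       = ry j \<bullet> (z - yk (Suc j)) + (z - yk (Suc j)) \<bullet> (Kop A B (xk (Suc j)) + (b, d))"
      by (simp add: inner_add_left inner_add_right inner_commute)
    ultimately show ?thesis using P1[OF z, of j] by linarith
  qed
  have P5: "0 \<le> eps j + rx j \<bullet> (xk (Suc j) - xs) + ry j \<bullet> (yk (Suc j) - ys)" for j
  proof -
    have s1: "Lhat Q c A B b d \<rho> xs (yk (Suc j)) \<le> Lhat Q c A B b d \<rho> xs ys"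
      using saddle(3)[OF xin[of "Suc j"] yin[of j]] by blast
    have s2: "Lhat Q c A B b d \<rho> xs ys \<le> Lhat Q c A B b d \<rho> (xk (Suc j)) ys"
      using saddle(3)[OF xin[of "Suc j"] yin[of j]] by blast
    have "rx j \<bullet> (xs - xk (Suc j)) = - (rx j \<bullet> (xk (Suc j) - xs))"
      by (simp add: inner_diff_right)
    moreover have "ry j \<bullet> (ys - yk (Suc j)) = - (ry j \<bullet> (yk (Suc j) - ys))"
      by (simp add: inner_diff_right)
    ultimately show ?thesis using PX[OF saddle(1), of j] PY[OF saddle(2), of j] s1 s2 by linarith
  qed
  have mu0: "\<mu> \<ge> 0" unfolding \<mu>_def by (rule onorm_pos_le[OF Q_bl])
  have kap0: "\<kappa> \<ge> 0" unfolding \<kappa>_def by (rule onorm_pos_le[OF Kop_bl])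
  have s8: "\<tau>1 * (8 * (\<mu> + \<rho>)) \<le> 1"
  proof (cases "\<mu> + \<rho> = 0")
    case True then show ?thesis using step2 tau1 unfolding \<mu>_def by simp
  next
    case False
    then have "\<mu> + \<rho> > 0" using mu0 rho by simp
    then show ?thesis using step2 unfolding \<mu>_def by (simp add: field_simps)
  qed
  have P4: "eps j \<le> \<tau>1 * (norm (rx j))\<^sup>2 / 8" for j
  proof -
    define h where "h = xk (Suc j) - xk j"
    have "eps j = h \<bullet> (Q *v h) - \<rho> * (h \<bullet> h)"
      using Lhat_expand[OF symQ, of c A B b d \<rho> "xk j" h "yk (Suc j)"] unfolding eps_def h_def by simp
    also have "\<dots> \<le> h \<bullet> (Q *v h)" using rho by simp
    also have "\<dots> \<le> norm h * norm (Q *v h)" by (rule norm_cauchy_schwarz)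
    also have "\<dots> \<le> norm h * (\<mu> * norm h)"
      unfolding \<mu>_def by (rule mult_left_mono[OF onorm[OF Q_bl] norm_ge_zero])
    also have "\<dots> \<le> (\<mu> + \<rho>) * (norm h)\<^sup>2"
    proof -
      have "0 \<le> \<rho> * (norm h * norm h)" using rho by simp
      then show ?thesis by (simp add: power2_eq_square algebra_simps)
    qed
    also have "norm h = \<tau>1 * norm (rx j)"
    proof -
      have "h = - (\<tau>1 *\<^sub>R rx j)" unfolding h_def using hx_eq[of j] by (metis minus_diff_eq)
      then show ?thesis using tau1 by simp
    qed
    also have "(\<mu> + \<rho>) * (\<tau>1 * norm (rx j))\<^sup>2 = (\<tau>1 * (8 * (\<mu> + \<rho>))) * (\<tau>1 * (norm (rx j))\<^sup>2 / 8)"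
      by (simp add: power2_eq_square)
    also have "\<dots> \<le> 1 * (\<tau>1 * (norm (rx j))\<^sup>2 / 8)"
      using s8 tau1 by (intro mult_right_mono) auto
    finally show ?thesis by simp
  qed
  define V where "V = (\<lambda>k. (norm (xk k - xs))\<^sup>2 / (2 * \<tau>1) + (norm (yup k - ys))\<^sup>2 / (2 * \<tau>2))"
  define \<delta> where "\<delta> = (\<lambda>j. \<tau>1 * (norm (rx j))\<^sup>2 / 2 + \<tau>2 * (norm (ry j))\<^sup>2 / 2
       - \<tau>1 * \<tau>2 * (ry j \<bullet> Kop A B (rx j)) - eps j)"
  have P6: "\<delta> j \<le> V j - V (Suc j)" for j
  proof -
    have X1: "2 * ((xk j - xk (Suc j)) \<bullet> (xk (Suc j) - xs)) = (norm (xk j - xs))\<^sup>2 - (norm (xk (Suc j) - xs))\<^sup>2 - (norm (xk j - xk (Suc j)))\<^sup>2"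
      by (rule two_inner_id)
    then have X2: "2 * \<tau>1 * (rx j \<bullet> (xk (Suc j) - xs)) = (norm (xk j - xs))\<^sup>2 - (norm (xk (Suc j) - xs))\<^sup>2 - \<tau>1\<^sup>2 * (norm (rx j))\<^sup>2"
      unfolding hx_eq using tau1 by (simp add: power2_eq_square algebra_simps)
    have Y1: "2 * ((yup j - yup (Suc j)) \<bullet> (yup (Suc j) - ys)) = (norm (yup j - ys))\<^sup>2 - (norm (yup (Suc j) - ys))\<^sup>2 - (norm (yup j - yup (Suc j)))\<^sup>2"
      by (rule two_inner_id)
    then have Y2: "2 * \<tau>2 * (ry j \<bullet> (yup (Suc j) - ys)) = (norm (yup j - ys))\<^sup>2 - (norm (yup (Suc j) - ys))\<^sup>2 - \<tau>2\<^sup>2 * (norm (ry j))\<^sup>2"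
      unfolding hy_eq using tau2 by (simp add: power2_eq_square algebra_simps)
    have ykS: "yk (Suc j) = yup (Suc j) + (\<tau>1 * \<tau>2) *\<^sub>R Kop A B (rx j)"
    proof -
      have "xk (Suc j) - xp (Suc j) = - (\<tau>1 *\<^sub>R rx j)" using recS[of j] hx_eq[of j] by (metis minus_diff_eq)
      then show ?thesis using yupE[of "Suc j"] by (simp add: Kop_scale linear_neg[OF Kop_linear])
    qed
    have Y3: "ry j \<bullet> (yk (Suc j) - ys) = ry j \<bullet> (yup (Suc j) - ys) + \<tau>1 * \<tau>2 * (ry j \<bullet> Kop A B (rx j))"
      unfolding ykS by (simp add: inner_diff_right inner_add_right)
    have "rx j \<bullet> (xk (Suc j) - xs) = ((norm (xk j - xs))\<^sup>2 - (norm (xk (Suc j) - xs))\<^sup>2) / (2 * \<tau>1) - \<tau>1 * (norm (rx j))\<^sup>2 / 2"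
      using X2 tau1 by (simp add: field_simps power2_eq_square)
    moreover have "ry j \<bullet> (yup (Suc j) - ys) = ((norm (yup j - ys))\<^sup>2 - (norm (yup (Suc j) - ys))\<^sup>2) / (2 * \<tau>2) - \<tau>2 * (norm (ry j))\<^sup>2 / 2"
      using Y2 tau2 by (simp add: field_simps power2_eq_square)
    ultimately show ?thesis using P5[of j] Y3 unfolding \<delta>_def V_def by (simp add: diff_divide_distrib)
  qed
  have P7: "\<tau>2 * (norm (ry j))\<^sup>2 / 3 \<le> \<delta> j \<and> \<tau>1 * (norm (rx j))\<^sup>2 / 4 \<le> \<delta> j \<and> 2 * eps j \<le> \<delta> j" for j
  proof -
    define p where "p = norm (ry j)"
    define v where "v = norm (rx j)"
    have p0: "p \<ge> 0" "v \<ge> 0" unfolding p_def v_def by simp_all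
    have m: "ry j \<bullet> Kop A B (rx j) \<le> p * (\<kappa> * v)"
    proof -
      have "ry j \<bullet> Kop A B (rx j) \<le> norm (ry j) * norm (Kop A B (rx j))" by (rule norm_cauchy_schwarz)
      also have "\<dots> \<le> norm (ry j) * (\<kappa> * norm (rx j))"
        unfolding \<kappa>_def by (rule mult_left_mono[OF onorm[OF Kop_bl] norm_ge_zero])
      finally show ?thesis unfolding p_def v_def .
    qed
    have tk: "\<tau>1 * \<tau>2 * \<kappa>\<^sup>2 \<le> 1/4" using step1 unfolding \<kappa>_def .
    have m2: "\<tau>1 * \<tau>2 * (ry j \<bullet> Kop A B (rx j)) \<le> \<tau>1 * \<tau>2 * (p * (\<kappa> * v))"
      using m tau1 tau2 by (simp add: mult_left_mono)
    have e: "eps j \<le> \<tau>1 * v\<^sup>2 / 8" using P4[of j] unfolding v_def .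
    have dl: "\<delta> j \<ge> \<tau>1 * v\<^sup>2 / 2 + \<tau>2 * p\<^sup>2 / 2 - \<tau>1 * \<tau>2 * (p * (\<kappa> * v)) - eps j"
      unfolding \<delta>_def p_def v_def using m2 unfolding p_def v_def by linarith
    have sq1: "0 \<le> (\<tau>2 / 6) * (p - 3 * \<tau>1 * \<kappa> * v)\<^sup>2" using tau2 by simp
    have sq2: "0 \<le> (\<tau>2 / 2) * (p - \<tau>1 * \<kappa> * v)\<^sup>2" using tau2 by simp
    have r1: "0 \<le> (3/2) * \<tau>1 * v\<^sup>2 * (1/4 - \<tau>1 * \<tau>2 * \<kappa>\<^sup>2)" using tau1 tk by simp
    have r2: "0 \<le> (\<tau>1 * v\<^sup>2 / 2) * (1/4 - \<tau>1 * \<tau>2 * \<kappa>\<^sup>2)" using tau1 tk by simp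
    have i1: "3 * \<tau>1 * v\<^sup>2 / 8 + \<tau>2 * p\<^sup>2 / 6 - \<tau>1 * \<tau>2 * (p * (\<kappa> * v))
        = (\<tau>2 / 6) * (p - 3 * \<tau>1 * \<kappa> * v)\<^sup>2 + (3/2) * \<tau>1 * v\<^sup>2 * (1/4 - \<tau>1 * \<tau>2 * \<kappa>\<^sup>2)"
      by (simp add: power2_eq_square algebra_simps)
    have i2: "\<tau>1 * v\<^sup>2 / 8 + \<tau>2 * p\<^sup>2 / 2 - \<tau>1 * \<tau>2 * (p * (\<kappa> * v))
        = (\<tau>2 / 2) * (p - \<tau>1 * \<kappa> * v)\<^sup>2 + (\<tau>1 * v\<^sup>2 / 2) * (1/4 - \<tau>1 * \<tau>2 * \<kappa>\<^sup>2)"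
      by (simp add: power2_eq_square algebra_simps)
    show ?thesis using dl e sq1 sq2 r1 r2 i1 i2 unfolding p_def[symmetric] v_def[symmetric] by linarith
  qed
  have V0: "V 0 = (norm (xs - x0))\<^sup>2 / (2 * \<tau>1) + (norm (ys - y0))\<^sup>2 / (2 * \<tau>2)"
    unfolding V_def yup_def using rec0 by (simp add: norm_minus_commute)
  have Vnn: "V k \<ge> 0" for k unfolding V_def using tau1 tau2 by simp
  have sumle: "(\<Sum>i<N. \<delta> i) \<le> V 0 - V N" for N
  proof (induction N)
    case 0 then show ?case by simp
  next
    case (Suc N) then show ?case using P6[of N] by simp
  qed
  show ?thesis
  proof (intro allI impI)
    fix N :: nat assume N1: "N \<ge> 1"
    define D where "D = (norm (xs - x0))\<^sup>2 / (2 * \<tau>1) + (norm (ys - y0))\<^sup>2 / (2 * \<tau>2)"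
    have sD: "(\<Sum>i<N. \<delta> i) \<le> D" using sumle[of N] Vnn[of N] V0 unfolding D_def by linarith
    have Npos: "real N > 0" using N1 by simp
    obtain j where j: "j < N" "\<delta> j \<le> D / real N"
    proof (rule ccontr)
      assume "\<not> thesis"
      then have lt: "\<forall>i<N. D / real N < \<delta> i" using that by force
      have "(\<Sum>i<N. D / real N) < (\<Sum>i<N. \<delta> i)"
        proof (rule sum_strict_mono)
        have "0 \<in> {..<N}" using N1 by simp
        then show "{..<N} \<noteq> {}" by blast
      qed (use lt in auto)
      moreover have "(\<Sum>i<N. D / real N) = D" using Npos by simp
      ultimately show False using sD by simp
    qed
    have D0: "D \<ge> 0" unfolding D_def using tau1 tau2 by simp
    have Nd: "real N * \<delta> j \<le> D" using j(2) Npos by (simp add: field_simps)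
    have q1: "real N * (\<tau>2 * (norm (ry j))\<^sup>2) \<le> real N * (3 * \<delta> j)"
      using P7[of j] Npos by (intro mult_left_mono) auto
    have q2: "real N * (\<tau>1 * (norm (rx j))\<^sup>2) \<le> real N * (4 * \<delta> j)"
      using P7[of j] Npos by (intro mult_left_mono) auto
    have q3: "real N * (2 * eps j) \<le> real N * \<delta> j"
      using P7[of j] Npos by (intro mult_left_mono) auto
    have c1: "(norm (ry j))\<^sup>2 * (\<tau>2 * real N) \<le> 3 * D"
    proof -
      have "(norm (ry j))\<^sup>2 * (\<tau>2 * real N) = real N * (\<tau>2 * (norm (ry j))\<^sup>2)" by (simp add: mult_ac)
      then show ?thesis using q1 Nd by linarith
    qed
    have c2: "(norm (rx j))\<^sup>2 * (\<tau>1 * real N) \<le> 4 * D"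
    proof -
      have "(norm (rx j))\<^sup>2 * (\<tau>1 * real N) = real N * (\<tau>1 * (norm (rx j))\<^sup>2)" by (simp add: mult_ac)
      then show ?thesis using q2 Nd by linarith
    qed
    have c3: "eps j * (2 * real N) \<le> D"
    proof -
      have "eps j * (2 * real N) = real N * (2 * eps j)" by (simp add: mult_ac)
      then show ?thesis using q3 Nd by linarith
    qed
    have b1: "(norm (ry j))\<^sup>2 \<le> 3 * D / (\<tau>2 * real N)"
      by (rule pos_le_divide_eq[THEN iffD2]) (use c1 tau2 Npos in auto)
    have b2: "(norm (rx j))\<^sup>2 \<le> 4 * D / (\<tau>1 * real N)"
      by (rule pos_le_divide_eq[THEN iffD2]) (use c2 tau1 Npos in auto)
    have b3: "eps j \<le> D / (2 * real N)"
      by (rule pos_le_divide_eq[THEN iffD2]) (use c3 Npos in auto)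
    have n1: "norm (ry j) \<le> sqrt (3 * D) / sqrt (\<tau>2 * real N)"
    proof -
      have "norm (ry j) = sqrt ((norm (ry j))\<^sup>2)" by simp
      also have "\<dots> \<le> sqrt (3 * D / (\<tau>2 * real N))" using b1 by (rule real_sqrt_le_mono)
      finally show ?thesis by (simp add: real_sqrt_divide)
    qed
    have n2: "norm (rx j) \<le> 2 * sqrt D / sqrt (\<tau>1 * real N)"
    proof -
      have "norm (rx j) = sqrt ((norm (rx j))\<^sup>2)" by simp
      also have "\<dots> \<le> sqrt (4 * D / (\<tau>1 * real N))" using b2 by (rule real_sqrt_le_mono)
      also have "sqrt (4 * D) = 2 * sqrt D" by (simp add: real_sqrt_mult)
      then have "sqrt (4 * D / (\<tau>1 * real N)) = 2 * sqrt D / sqrt (\<tau>1 * real N)" by (simp add: real_sqrt_divide)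
      finally show ?thesis .
    qed
    have sub1: "ry j \<in> subdiff (\<lambda>y. ereal (- Lhat Q c A B b d \<rho> (xk (Suc j)) y) + ind Yset y) (yk (Suc j))"
      unfolding subdiff_def
    proof (clarify)
      fix z
      show "ereal (- Lhat Q c A B b d \<rho> (xk (Suc j)) (yk (Suc j))) + ind Yset (yk (Suc j)) + ereal (ry j \<bullet> (z - yk (Suc j)))
            \<le> ereal (- Lhat Q c A B b d \<rho> (xk (Suc j)) z) + ind Yset z"
      proof (cases "z \<in> Yset")
        case True then show ?thesis using PY[OF True, of j] yin[of j] by (simp add: ind_def)
      next
        case False then show ?thesis by (simp add: ind_def)
      qed
    qed
    have sub2: "rx j \<in> eps_subdiff (\<lambda>x. ereal (Lhat Q c A B b d \<rho> x (yk (Suc j))) + ind unitbox x) (eps j) (xk (Suc j))"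
      unfolding eps_subdiff_def
    proof (clarify)
      fix z
      show "ereal (Lhat Q c A B b d \<rho> (xk (Suc j)) (yk (Suc j))) + ind unitbox (xk (Suc j)) + ereal (rx j \<bullet> (z - xk (Suc j)) - eps j)
            \<le> ereal (Lhat Q c A B b d \<rho> z (yk (Suc j))) + ind unitbox z"
      proof (cases "z \<in> unitbox")
        case True then show ?thesis using PX[OF True, of j] xin[of "Suc j"] by (simp add: ind_def)
      next
        case False then show ?thesis by (simp add: ind_def)
      qed
    qed
    show "let \<Delta>0 = (norm (xs - x0))\<^sup>2 / (2 * \<tau>1) + (norm (ys - y0))\<^sup>2 / (2 * \<tau>2) in
     \<exists>k0. 1 \<le> k0 \<and> k0 \<le> N \<and>
       (let ry = (1 / \<tau>2) *\<^sub>R (yup (k0 - 1) - yup k0);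
            rx = (1 / \<tau>1) *\<^sub>R (xk (k0 - 1) - xk k0);
            \<epsilon> = Lhat Q c A B b d \<rho> (xk k0) (yk k0)
                - (Lhat Q c A B b d \<rho> (xk (k0 - 1)) (yk k0)
                   + gradx Q c A B \<rho> (xk (k0 - 1)) (yk k0) \<bullet> (xk k0 - xk (k0 - 1)))
        in ry \<in> subdiff (\<lambda>y. ereal (- Lhat Q c A B b d \<rho> (xk k0) y) + ind Yset y) (yk k0)
         \<and> rx \<in> eps_subdiff (\<lambda>x. ereal (Lhat Q c A B b d \<rho> x (yk k0)) + ind unitbox x) \<epsilon> (xk k0)
         \<and> norm ry \<le> sqrt (3 * \<Delta>0) / sqrt (\<tau>2 * real N)
         \<and> norm rx \<le> 2 * sqrt \<Delta>0 / sqrt (\<tau>1 * real N)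
         \<and> \<epsilon> \<le> \<Delta>0 / (2 * real N))"
      unfolding Let_def D_def[symmetric]
    proof (intro exI[of _ "Suc j"] conjI)
      show "1 \<le> Suc j" by simp
      show "Suc j \<le> N" using j(1) by simp
    qed (use sub1 sub2 n1 n2 b3 in \<open>simp_all add: rx_def ry_def eps_def\<close>)
  qed
qed
end
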